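(* Let $W\in\mathcal{P}(\mathcal{Y}|\mathcal{X})$ be singular. Consider any $(N,R)$ code $(f,\varphi)$ with codewords $\mathbf{x}^N(m)$, $m\in\mathcal{M}$, and average error probability $\bar{\mathrm{P}}_{\mathrm{e}}(f,\varphi)$. Fix $Q\in\mathcal{P}(\mathcal{X})$ and $\mathbf{z}^N\in\mathcal{X}^N$, and assume that for all $m\in\mathcal{M}$, $W(\mathcal{S}_R(Q)\mid\mathbf{x}^N(m))=W(\mathcal{S}_R(Q)\mid\mathbf{z}^N)$ and $q_Q$ dominates $W(\cdot|x)$ for every $x$ in the support of the empirical distribution of $\mathbf{x}^N(m)$. Then $$\bar{\mathrm{P}}_{\mathrm{e}}(f,\varphi)\ge W(\mathcal{S}_R(Q)\mid\mathbf{z}^N)-\sum_{\mathbf{y}^N\in\mathcal{S}_R(Q)}q_Q(\mathbf{y}^N)\exp\Big\{-N\Big[R-\frac1N\sum_{i=1}^N\ln\frac1{\alpha_{y_i}(Q)}\Big]\Big\}.$$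
   Context: $\mathcal{X},\mathcal{Y}$ finite; memoryless channel $W(\mathbf{y}^N|\mathbf{x}^N)=\prod_iW(y_i|x_i)$. $W$ is singular: for all $(x,y,z)$ with $W(y|x)W(y|z)>0$, $W(y|x)=W(y|z)$. An $(N,R)$ code has message set $\mathcal{M}=\{1,\dots,\lceil e^{NR}\rceil\}$, encoder $f$ and decoder $\varphi:\mathcal{Y}^N\to\mathcal{M}$; average error probability is over uniform messages. $q_Q(y)=\sum_xQ(x)W(y|x)$, $q_Q(\mathbf{y}^N)=\prod_iq_Q(y_i)$; $\alpha_y(Q)=\sum_{x:W(y|x)>0}Q(x)$; $\mathcal{S}_R(Q)=\{\mathbf{y}^N:\frac1N\sum_i\ln\frac1{\alpha_{y_i}(Q)}\le R\}$. "$q_Q$ dominates $W(\cdot|x)$" means $W(\cdot|x)\ll q_Q$. *)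

theory Defs
  imports Complex_Main
begin

text \<open>Channel: W x y = W(y|x). Sequences of length N are lists.\<close>

definition channel :: "('x::finite \<Rightarrow> 'y::finite \<Rightarrow> real) \<Rightarrow> bool" where
  "channel W \<longleftrightarrow> (\<forall>x y. 0 \<le> W x y) \<and> (\<forall>x. (\<Sum>y\<in>UNIV. W x y) = 1)"

definition pdist :: "('x::finite \<Rightarrow> real) \<Rightarrow> bool" where
  "pdist Q \<longleftrightarrow> (\<forall>x. 0 \<le> Q x) \<and> (\<Sum>x\<in>UNIV. Q x) = 1"

definition singular :: "('x \<Rightarrow> 'y \<Rightarrow> real) \<Rightarrow> bool" where
  "singular W \<longleftrightarrow> (\<forall>x y z. W x y * W z y > 0 \<longrightarrow> W x y = W z y)"

definition chanN :: "('x \<Rightarrow> 'y \<Rightarrow> real) \<Rightarrow> 'x list \<Rightarrow> 'y list \<Rightarrow> real" where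
  "chanN W xs ys = (\<Prod>i<length ys. W (xs ! i) (ys ! i))"

definition chan_set :: "('x \<Rightarrow> 'y \<Rightarrow> real) \<Rightarrow> 'y list set \<Rightarrow> 'x list \<Rightarrow> real" where
  "chan_set W S xs = (\<Sum>ys\<in>S. chanN W xs ys)"

definition qQ :: "('x::finite \<Rightarrow> 'y \<Rightarrow> real) \<Rightarrow> ('x \<Rightarrow> real) \<Rightarrow> 'y \<Rightarrow> real" where
  "qQ W Q y = (\<Sum>x\<in>UNIV. Q x * W x y)"

definition qQN :: "('x::finite \<Rightarrow> 'y \<Rightarrow> real) \<Rightarrow> ('x \<Rightarrow> real) \<Rightarrow> 'y list \<Rightarrow> real" where
  "qQN W Q ys = (\<Prod>i<length ys. qQ W Q (ys ! i))"

definition alpha :: "('x::finite \<Rightarrow> 'y \<Rightarrow> real) \<Rightarrow> ('x \<Rightarrow> real) \<Rightarrow> 'y \<Rightarrow> real" where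
  "alpha W Q y = (\<Sum>x\<in>{x. W x y > 0}. Q x)"

text \<open>S_R(Q) among sequences of length N; ln(1/0) = +infinity, so any y with
  alpha_y(Q) = 0 excludes the sequence.\<close>
definition SR :: "('x::finite \<Rightarrow> 'y \<Rightarrow> real) \<Rightarrow> nat \<Rightarrow> real \<Rightarrow> ('x \<Rightarrow> real) \<Rightarrow> 'y list set" where
  "SR W N R Q = {ys. length ys = N \<and> (\<forall>i<N. alpha W Q (ys ! i) > 0) \<and>
      (1 / real N) * (\<Sum>i<N. ln (1 / alpha W Q (ys ! i))) \<le> R}"

definition msgs :: "nat \<Rightarrow> real \<Rightarrow> nat set" where
  "msgs N R = {1..nat \<lceil>exp (real N * R)\<rceil>}"

definition is_code :: "nat \<Rightarrow> real \<Rightarrow> (nat \<Rightarrow> 'x list) \<Rightarrow> ('y list \<Rightarrow> nat) \<Rightarrow> bool" where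
  "is_code N R f \<phi> \<longleftrightarrow> (\<forall>m\<in>msgs N R. length (f m) = N) \<and>
      (\<forall>ys. length ys = N \<longrightarrow> \<phi> ys \<in> msgs N R)"

definition avg_err :: "('x \<Rightarrow> 'y \<Rightarrow> real) \<Rightarrow> nat \<Rightarrow> real \<Rightarrow> (nat \<Rightarrow> 'x list) \<Rightarrow> ('y list \<Rightarrow> nat) \<Rightarrow> real" where
  "avg_err W N R f \<phi> = (1 / real (card (msgs N R))) *
     (\<Sum>m\<in>msgs N R. \<Sum>ys\<in>{ys. length ys = N \<and> \<phi> ys \<noteq> m}. chanN W (f m) ys)"

definition dominates :: "('y \<Rightarrow> real) \<Rightarrow> ('x \<Rightarrow> 'y \<Rightarrow> real) \<Rightarrow> 'x \<Rightarrow> bool" where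
  "dominates q W x \<longleftrightarrow> (\<forall>y. W x y > 0 \<longrightarrow> q y > 0)"

end

theory Submission
  imports Defs
begin

lemma q_eq:
  fixes W :: "'x::finite \<Rightarrow> 'y::finite \<Rightarrow> real"
  assumes "singular W" "W x y > 0" "channel W"
  shows "qQ W Q y = W x y * alpha W Q y"
proof -
  have "qQ W Q y = (\<Sum>x'\<in>{x'. W x' y > 0}. Q x' * W x' y)"
    unfolding qQ_def
  proof (rule sum.mono_neutral_right)
    show "\<forall>i\<in>UNIV - {x'. W x' y > 0}. Q i * W i y = 0"
      using assms(3) unfolding channel_def by (auto simp: not_less intro: antisym)
  qed auto
  also have "\<dots> = (\<Sum>x'\<in>{x'. W x' y > 0}. Q x' * W x y)"
  proof (rule sum.cong)
    fix x' assume "x' \<in> {x'. W x' y > 0}"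
    then have "W x' y * W x y > 0" using assms(2) by simp
    then show "Q x' * W x' y = Q x' * W x y" using assms(1) unfolding singular_def by metis
  qed simp
  also have "\<dots> = W x y * alpha W Q y" unfolding alpha_def by (simp add: sum_distrib_left mult.commute)
  finally show ?thesis .
qed

lemma pt_bound:
  fixes W :: "'x::finite \<Rightarrow> 'y::finite \<Rightarrow> real"
  assumes "singular W" "channel W" "pdist Q" "alpha W Q y > 0"
  shows "W x y \<le> qQ W Q y / alpha W Q y"
proof (cases "W x y > 0")
  case True
  then show ?thesis using q_eq[OF assms(1) True assms(2), of Q] assms(4) by simp
next
  case False
  then have "W x y = 0" using assms(2) unfolding channel_def by (meson antisym not_less)
  moreover have "qQ W Q y \<ge> 0" using assms(2,3) unfolding qQ_def channel_def pdist_def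
    by (intro sum_nonneg) auto
  ultimately show ?thesis using assms(4) by simp
qed

lemma seq_bound:
  fixes W :: "'x::finite \<Rightarrow> 'y::finite \<Rightarrow> real"
  assumes "singular W" "channel W" "pdist Q" "ys \<in> SR W N R Q"
  shows "chanN W xs ys \<le> qQN W Q ys * exp (\<Sum>i<N. ln (1 / alpha W Q (ys ! i)))"
proof -
  have len: "length ys = N" and pos: "\<And>i. i < N \<Longrightarrow> alpha W Q (ys ! i) > 0"
    using assms(4) unfolding SR_def by auto
  have "exp (\<Sum>i<N. ln (1 / alpha W Q (ys ! i))) = (\<Prod>i<N. 1 / alpha W Q (ys ! i))"
    using pos by (simp add: exp_sum)
  then have "qQN W Q ys * exp (\<Sum>i<N. ln (1 / alpha W Q (ys ! i)))
      = (\<Prod>i<N. qQ W Q (ys ! i) / alpha W Q (ys ! i))"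
    unfolding qQN_def len by (simp add: prod.distrib[symmetric])
  moreover have "chanN W xs ys \<le> (\<Prod>i<N. qQ W Q (ys ! i) / alpha W Q (ys ! i))"
    unfolding chanN_def len
    apply (rule prod_mono)
    using assms(2) pos pt_bound[OF assms(1-3)] unfolding channel_def by auto
  ultimately show ?thesis by simp
qed

theorem lemma11:
  fixes W :: "'x::finite \<Rightarrow> 'y::finite \<Rightarrow> real"
    and Q :: "'x \<Rightarrow> real" and N :: nat and R :: real
    and f :: "nat \<Rightarrow> 'x list" and \<phi> :: "'y list \<Rightarrow> nat" and z :: "'x list"
  assumes "channel W" and "singular W" and "pdist Q"
    and "N > 0"
    and "is_code N R f \<phi>"
    and "length z = N"
    and "\<forall>m\<in>msgs N R. chan_set W (SR W N R Q) (f m) = chan_set W (SR W N R Q) z"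
    and "\<forall>m\<in>msgs N R. \<forall>x\<in>set (f m). dominates (qQ W Q) W x"
  shows "avg_err W N R f \<phi> \<ge> chan_set W (SR W N R Q) z
     - (\<Sum>ys\<in>SR W N R Q. qQN W Q ys *
          exp (- real N * (R - (1 / real N) * (\<Sum>i<N. ln (1 / alpha W Q (ys ! i))))))"
proof -
  define S where "S = SR W N R Q"
  define M where "M = msgs N R"
  define B where "B = (\<lambda>ys. qQN W Q ys * exp (\<Sum>i<N. ln (1 / alpha W Q (ys ! i))))"
  have Wnn: "\<And>x y. W x y \<ge> 0" using assms(1) unfolding channel_def by auto
  have cnn: "\<And>xs ys. chanN W xs ys \<ge> 0" unfolding chanN_def using Wnn by (simp add: prod_nonneg)
  have finL: "finite {ys::'y list. length ys = N}"
    using finite_lists_length_eq[of "UNIV::'y set" N] by simp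
  have SsubL: "S \<subseteq> {ys. length ys = N}" unfolding S_def SR_def by auto
  have finS: "finite S" using finite_subset[OF SsubL finL] .
  have finM: "finite M" unfolding M_def msgs_def by simp
  have cardM: "real (card M) \<ge> exp (real N * R)"
    unfolding M_def msgs_def by simp
  have ep: "exp (real N * R) > 0" by simp
  have Mpos: "real (card M) > 0" using cardM ep by linarith
  have Bnn: "\<And>ys. ys \<in> S \<Longrightarrow> B ys \<ge> 0"
    using seq_bound[OF assms(2,1,3)] cnn unfolding B_def S_def by (meson order_trans)
  have phiM: "\<And>ys. ys \<in> S \<Longrightarrow> \<phi> ys \<in> M"
    using assms(5) SsubL unfolding is_code_def M_def by auto
  have per: "(\<Sum>ys\<in>{ys. length ys = N \<and> \<phi> ys \<noteq> m}. chanN W (f m) ys)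
      \<ge> chan_set W S z - (\<Sum>ys\<in>{ys\<in>S. \<phi> ys = m}. B ys)" if mM: "m \<in> M" for m
  proof -
    have "(\<Sum>ys\<in>{ys. length ys = N \<and> \<phi> ys \<noteq> m}. chanN W (f m) ys)
        \<ge> (\<Sum>ys\<in>{ys\<in>S. \<phi> ys \<noteq> m}. chanN W (f m) ys)"
      by (rule sum_mono2) (use finL SsubL cnn in auto)
    moreover have "chan_set W S (f m) = (\<Sum>ys\<in>{ys\<in>S. \<phi> ys \<noteq> m}. chanN W (f m) ys)
        + (\<Sum>ys\<in>{ys\<in>S. \<phi> ys = m}. chanN W (f m) ys)"
      unfolding chan_set_def
      by (subst sum.union_disjoint[symmetric]) (use finS in \<open>auto intro: sum.cong\<close>)
    moreover have "chan_set W S (f m) = chan_set W S z" using assms(7) mM unfolding S_def M_def by auto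
    moreover have "(\<Sum>ys\<in>{ys\<in>S. \<phi> ys = m}. chanN W (f m) ys) \<le> (\<Sum>ys\<in>{ys\<in>S. \<phi> ys = m}. B ys)"
      by (rule sum_mono) (use seq_bound[OF assms(2,1,3)] in \<open>auto simp: B_def S_def\<close>)
    ultimately show ?thesis by linarith
  qed
  have swap: "(\<Sum>m\<in>M. \<Sum>ys\<in>{ys\<in>S. \<phi> ys = m}. B ys) = (\<Sum>ys\<in>S. B ys)"
  proof -
    have "(\<Sum>m\<in>M. \<Sum>ys\<in>{ys\<in>S. \<phi> ys = m}. B ys) = (\<Sum>m\<in>M. \<Sum>ys\<in>S. if \<phi> ys = m then B ys else 0)"
      by (rule sum.cong) (use finS in \<open>auto simp: sum.If_cases Int_def\<close>)
    also have "\<dots> = (\<Sum>ys\<in>S. \<Sum>m\<in>M. if \<phi> ys = m then B ys else 0)" by (rule sum.swap)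
    also have "\<dots> = (\<Sum>ys\<in>S. B ys)"
      by (rule sum.cong) (use finM phiM in auto)
    finally show ?thesis .
  qed
  have A1: "avg_err W N R f \<phi> \<ge> (1 / real (card M)) * (\<Sum>m\<in>M. chan_set W S z - (\<Sum>ys\<in>{ys\<in>S. \<phi> ys = m}. B ys))"
    unfolding avg_err_def M_def[symmetric]
    using per Mpos by (intro mult_left_mono sum_mono) auto
  have A2: "(1 / real (card M)) * (\<Sum>m\<in>M. chan_set W S z - (\<Sum>ys\<in>{ys\<in>S. \<phi> ys = m}. B ys)) = chan_set W S z - (1 / real (card M)) * (\<Sum>ys\<in>S. B ys)"
    using Mpos by (simp add: sum_subtractf swap field_simps)
  have A: "avg_err W N R f \<phi> \<ge> chan_set W S z - (1 / real (card M)) * (\<Sum>ys\<in>S. B ys)" using A1 A2 by linarith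
  have "(1 / real (card M)) * (\<Sum>ys\<in>S. B ys) \<le> exp (- (real N * R)) * (\<Sum>ys\<in>S. B ys)"
  proof (rule mult_right_mono)
    have "1 / real (card M) \<le> 1 / exp (real N * R)"
      using cardM ep by (simp add: frac_le)
    then show "1 / real (card M) \<le> exp (- (real N * R))" by (simp add: exp_minus field_simps)
  qed (use Bnn in \<open>simp add: sum_nonneg\<close>)
  also have "\<dots> = (\<Sum>ys\<in>S. qQN W Q ys *
          exp (- real N * (R - (1 / real N) * (\<Sum>i<N. ln (1 / alpha W Q (ys ! i))))))"
  proof -
    have pt: "exp (- (real N * R)) * B ys = qQN W Q ys *
          exp (- real N * (R - (1 / real N) * (\<Sum>i<N. ln (1 / alpha W Q (ys ! i)))))" for ys
    proof -
      have eq: "- real N * (R - (1 / real N) * (\<Sum>i<N. ln (1 / alpha W Q (ys ! i))))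
          = - (real N * R) + (\<Sum>i<N. ln (1 / alpha W Q (ys ! i)))"
        using assms(4) by (simp add: field_simps)
      show ?thesis unfolding B_def eq exp_add by simp
    qed
    show ?thesis unfolding sum_distrib_left pt ..
  qed
  finally show ?thesis using A unfolding S_def by linarith
qed

end
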